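(* Let $X$ be a separable Banach space over $\mathbb{K}\in\{\mathbb{R},\mathbb{C}\}$ and $T\colon X\to X$ a bounded linear operator. If there exists a uniformly Li-Yorke scrambled subset of $X$ which is locally residual, then the whole space $X$ is uniformly Li-Yorke scrambled for $T$.
   Context: A subset $S\subset X$ with at least two points is uniformly Li-Yorke scrambled for $T$ if there exist sequences $\{p_n\}$, $\{q_n\}$ in $\mathbb{N}$ such that for all distinct $x,y\in S$: $\lim_n\|T^{p_n}x-T^{p_n}y\|=0$ and $\lim_n\|T^{q_n}x-T^{q_n}y\|=\infty$. A subset $A\subset X$ is locally residual if there is a nonempty open $U\subset X$ such that $A\cap U$ is residual in $U$ (contains a dense $G_\delta$ subset of $U$). *)

theory Defs
  imports "HOL-Analysis.Analysis"
begin

definition unif_LY_scrambled :: "('a::real_normed_vector \<Rightarrow> 'a) \<Rightarrow> 'a set \<Rightarrow> bool" where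
  "unif_LY_scrambled T S \<longleftrightarrow>
     (\<exists>x\<in>S. \<exists>y\<in>S. x \<noteq> y) \<and>
     (\<exists>p q :: nat \<Rightarrow> nat. \<forall>x\<in>S. \<forall>y\<in>S. x \<noteq> y \<longrightarrow>
        ((\<lambda>n. norm ((T ^^ p n) x - (T ^^ p n) y)) \<longlonglongrightarrow> 0) \<and>
        filterlim (\<lambda>n. norm ((T ^^ q n) x - (T ^^ q n) y)) at_top sequentially)"

definition residual_in :: "'a::topological_space set \<Rightarrow> 'a set \<Rightarrow> bool" where
  "residual_in U A \<longleftrightarrow>
     (\<exists>G. G \<subseteq> A \<inter> U \<and> gdelta_in (top_of_set U) G \<and> U \<subseteq> closure G)"

definition locally_residual :: "'a::topological_space set \<Rightarrow> bool" where
  "locally_residual A \<longleftrightarrow> (\<exists>U. open U \<and> U \<noteq> {} \<and> residual_in U A)"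

end

theory Submission
  imports Defs
begin

lemma dense_open_meets:
  assumes "open W" "W \<noteq> {}" "W \<subseteq> U" "U \<subseteq> closure G"
  shows "W \<inter> G \<noteq> {}"
  using assms open_Int_closure_eq_empty[of W G] by blast

lemma key:
  fixes U G :: "'a::banach set"
  assumes U: "open U" "U \<noteq> {}" and GU: "G \<subseteq> U"
    and gd: "gdelta_in (top_of_set U) G" and dense: "U \<subseteq> closure G"
  shows "\<exists>r>0. \<forall>z. norm z < r \<longrightarrow> (\<exists>x. x \<in> G \<and> x + z \<in> G)"
proof -
  obtain \<B> where cO: "countable \<B>" and oO: "\<And>B. B \<in> \<B> \<Longrightarrow> openin (top_of_set U) B"
    and GO: "\<Inter>\<B> = G"
    using gd unfolding gdelta_in_alt intersection_of_def by blast
  have openO: "open B" if "B \<in> \<B>" for B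
    using oO[OF that] U(1) openin_open_trans by blast
  have GsubO: "G \<subseteq> B" if "B \<in> \<B>" for B using GO that by blast
  obtain u where "u \<in> U" using U by blast
  then obtain r0 where r0: "r0 > 0" "ball u r0 \<subseteq> U" using U(1) open_contains_ball by blast
  define r where "r = r0 / 2"
  have r: "r > 0" using r0 by (simp add: r_def)
  define V where "V = ball u r"
  have VU: "V \<subseteq> U" using r0 by (auto simp: V_def r_def)
  have "\<forall>z. norm z < r \<longrightarrow> (\<exists>x. x \<in> G \<and> x + z \<in> G)"
  proof (intro allI impI)
    fix z :: 'a assume z: "norm z < r"
    define F where "F = {V} \<union> ((\<lambda>B. V \<inter> B) ` \<B>) \<union> ((\<lambda>B. V \<inter> (\<lambda>x. x + z) -` B) ` \<B>)"
    have cF: "countable F" using cO by (simp add: F_def)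
    have opF: "openin (top_of_set V) T \<and> top_of_set V closure_of T = topspace (top_of_set V)"
      if "T \<in> F" for T
    proof -
      have "open T \<and> T \<subseteq> V \<and> V \<subseteq> closure T"
      proof -
        consider "T = V" | B where "B \<in> \<B>" "T = V \<inter> B" | B where "B \<in> \<B>" "T = V \<inter> (\<lambda>x. x + z) -` B"
          using \<open>T \<in> F\<close> unfolding F_def by blast
        then show ?thesis
        proof cases
          case 1 then show ?thesis by (simp add: V_def closure_subset)
        next
          case (2 B)
          have "open T" using 2 openO by (auto simp: V_def)
          moreover have "V \<subseteq> closure T"
          proof
            fix x assume x: "x \<in> V"
            show "x \<in> closure T"
            proof (clarsimp simp: closure_approachable)
              fix e :: real assume e: "e > 0"
              have xin: "x \<in> ball x e \<inter> V" using x e by simp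
              have "open (ball x e \<inter> V)" by (simp add: V_def open_Int)
              then have "ball x e \<inter> V \<inter> G \<noteq> {}"
                using dense_open_meets[OF _ _ _ dense] xin VU by blast
              then obtain y where "y \<in> ball x e" "y \<in> V" "y \<in> G" by blast
              then show "\<exists>y\<in>T. dist y x < e" using 2 GsubO[OF 2(1)] by (auto simp: dist_commute)
            qed
          qed
          ultimately show ?thesis using 2 by auto
        next
          case (3 B)
          have "open T" using 3 openO
            by (auto simp: V_def intro!: open_Int continuous_open_vimage continuous_intros)
          moreover have "V \<subseteq> closure T"
          proof
            fix x assume x: "x \<in> V"
            show "x \<in> closure T"
            proof (clarsimp simp: closure_approachable)
              fix e :: real assume e: "e > 0"
              define W where "W = (\<lambda>y. y - z) -` (ball x e \<inter> V)"
              have oW: "open W" unfolding W_def V_def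
                by (auto intro!: continuous_open_vimage continuous_intros)
              have "x + z \<in> W" using x e by (simp add: W_def)
              moreover have "W \<subseteq> U"
              proof
                fix y assume "y \<in> W"
                then have "dist u (y - z) < r" by (simp add: W_def V_def)
                moreover have "dist u y \<le> dist u (y - z) + norm z"
                  by (metis dist_norm dist_triangle2 norm_minus_commute diff_diff_eq2 diff_add_cancel dist_diff(1) add_diff_cancel_left')
                ultimately have "dist u y < r0" using z by (simp add: r_def)
                then show "y \<in> U" using r0 by auto
              qed
              ultimately have "W \<inter> G \<noteq> {}" using dense_open_meets[OF oW _ _ dense] by blast
              then obtain y where y: "y \<in> W" "y \<in> G" by blast
              then have "y - z \<in> T" using 3 GsubO[OF 3(1)] by (auto simp: W_def)
              moreover have "dist (y - z) x < e" using y by (simp add: W_def dist_commute)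
              ultimately show "\<exists>y\<in>T. dist y x < e" by blast
            qed
          qed
          ultimately show ?thesis using 3 by auto
        qed
      qed
      then show ?thesis
        by (auto simp: openin_open_eq closure_of_subtopology_open euclidean_closure_of V_def)
    qed
    have cm: "completely_metrizable_space (top_of_set V)"
      by (rule completely_metrizable_space_openin[OF completely_metrizable_space_euclidean])
         (simp add: V_def)
    have "top_of_set V closure_of \<Inter>F = topspace (top_of_set V)"
      using Baire_category[OF disjI1[OF cm] cF] opF by blast
    moreover have "V \<noteq> {}" using r by (simp add: V_def)
    ultimately have "\<Inter>F \<noteq> {}" by auto
    then obtain x where x: "x \<in> \<Inter>F" by blast
    have "x \<in> G" unfolding GO[symmetric] using x by (auto simp: F_def)
    moreover have "x + z \<in> G" unfolding GO[symmetric]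
    proof
      fix B assume "B \<in> \<B>"
      then have "V \<inter> (\<lambda>x. x + z) -` B \<in> F" by (auto simp: F_def)
      then show "x + z \<in> B" using x by blast
    qed
    ultimately show "\<exists>x. x \<in> G \<and> x + z \<in> G" by blast
  qed
  then show ?thesis using r by blast
qed

lemma bl_pow:
  fixes T :: "'a::real_normed_vector \<Rightarrow> 'a"
  shows "bounded_linear T \<Longrightarrow> bounded_linear (T ^^ n)"
proof (induction n)
  case 0
  have "(T ^^ 0) = (\<lambda>x. x)" by (rule ext) simp
  then show ?case using bounded_linear_ident by metis
next
  case (Suc n) then show ?case using bounded_linear_compose[of T "T ^^ n"] by (simp add: o_def)
qed

theorem proposition3p12:
  fixes T :: "'a::banach \<Rightarrow> 'a"
  assumes separable: "\<exists>D. countable D \<and> closure D = (UNIV :: 'a set)"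
    and lin: "bounded_linear T"
    and ex: "\<exists>S. unif_LY_scrambled T S \<and> locally_residual S"
  shows "unif_LY_scrambled T (UNIV :: 'a set)"
proof -
  obtain S where S: "unif_LY_scrambled T S" and lr: "locally_residual S" using ex by blast
  obtain x0 y0 where xy0: "x0 \<in> S" "y0 \<in> S" "x0 \<noteq> y0" using S unfolding unif_LY_scrambled_def by blast
  obtain p q :: "nat \<Rightarrow> nat" where pq: "\<And>x y. x \<in> S \<Longrightarrow> y \<in> S \<Longrightarrow> x \<noteq> y \<Longrightarrow>
        ((\<lambda>n. norm ((T ^^ p n) x - (T ^^ p n) y)) \<longlonglongrightarrow> 0) \<and>
        filterlim (\<lambda>n. norm ((T ^^ q n) x - (T ^^ q n) y)) at_top sequentially"
    using S unfolding unif_LY_scrambled_def by blast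
  obtain U G where U: "open U" "U \<noteq> {}" and G: "G \<subseteq> S \<inter> U" "gdelta_in (top_of_set U) G" "U \<subseteq> closure G"
    using lr unfolding locally_residual_def residual_in_def by blast
  obtain r where r: "r > 0" and rG: "\<And>z. norm z < r \<Longrightarrow> \<exists>x. x \<in> G \<and> x + z \<in> G"
    using key[OF U _ G(2,3)] G(1) by blast
  have lp: "linear (T ^^ n)" for n using bl_pow[OF lin] bounded_linear.linear by blast
  have main: "((\<lambda>n. norm ((T ^^ p n) a - (T ^^ p n) b)) \<longlonglongrightarrow> 0) \<and>
        filterlim (\<lambda>n. norm ((T ^^ q n) a - (T ^^ q n) b)) at_top sequentially"
    if ab: "a \<noteq> b" for a b :: 'a
  proof -
    define z where "z = a - b"
    have nz: "norm z > 0" using ab by (simp add: z_def)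
    define c where "c = r / (2 * norm z)"
    have c: "c > 0" using nz r by (simp add: c_def)
    define w where "w = c *\<^sub>R z"
    have "norm w = r / 2" using nz c r by (simp add: w_def c_def)
    then obtain x where x: "x \<in> G" "x + w \<in> G" using rG[of w] r by (metis half_gt_zero less_add_same_cancel1 field_sum_of_halves)
    have "w \<noteq> 0" using c nz by (simp add: w_def)
    then have "x + w \<noteq> x" by simp
    then have L: "((\<lambda>n. norm ((T ^^ p n) (x + w) - (T ^^ p n) x)) \<longlonglongrightarrow> 0) \<and>
        filterlim (\<lambda>n. norm ((T ^^ q n) (x + w) - (T ^^ q n) x)) at_top sequentially"
      using pq x G(1) by blast
    have eq: "norm ((T ^^ m) a - (T ^^ m) b) = inverse c * norm ((T ^^ m) (x + w) - (T ^^ m) x)" for m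
    proof -
      have "(T ^^ m) (x + w) - (T ^^ m) x = c *\<^sub>R ((T ^^ m) a - (T ^^ m) b)"
        using lp[of m] by (simp add: linear_add linear_scale linear_diff w_def z_def)
      then show ?thesis using c by simp
    qed
    show ?thesis
    proof
      show "(\<lambda>n. norm ((T ^^ p n) a - (T ^^ p n) b)) \<longlonglongrightarrow> 0"
        unfolding eq using tendsto_mult_right_zero[OF conjunct1[OF L]] by simp
      show "filterlim (\<lambda>n. norm ((T ^^ q n) a - (T ^^ q n) b)) at_top sequentially"
        unfolding eq using c by (intro filterlim_tendsto_pos_mult_at_top[OF tendsto_const _ conjunct2[OF L]]) simp
    qed
  qed
  show ?thesis unfolding unif_LY_scrambled_def
    using xy0 main by blast
qed

end
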